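(* Let $d\ge1$, $0<p<\infty$, let $u$ be a weight on $\mathbb{R}^d$ and $w$ a weight on $(0,\infty)$ with $W(t)=\int_0^t w(s)\,ds$. Assume that $M:\Lambda^p_u(w)\to\Lambda^{p,\infty}_u(w)$ is bounded, i.e. there is $C>0$ with $\|Mf\|_{\Lambda^{p,\infty}_u(w)}\le C\|f\|_{\Lambda^p_u(w)}$ for all measurable $f$. Then there is a constant $K>0$ such that for every $0<\lambda<1$ and every Borel set $E\subset\mathbb{R}^d$, $$\big\|\chi_{\{M\chi_E>\lambda\}}\,M\chi_E\big\|^p_{\Lambda^p_u(w)}\le K\Big(1+\log\frac1\lambda\Big)\|\chi_E\|^p_{\Lambda^p_u(w)}.$$
   Context: A weight on $\mathbb{R}^d$ is a positive locally integrable function; $u(E)=\int_E u$. The Hardy–Littlewood maximal operator is $Mf(x)=\sup_{Q\ni x}\frac{1}{|Q|}\int_Q|f(y)|\,dy$, the supremum over all cubes $Q\subset\mathbb{R}^d$ containing $x$. For measurable $f$, $\|f\|^p_{\Lambda^p_u(w)}=\int_0^\infty p\,t^{p-1}W\big(u(\{x:|f(x)|>t\})\big)\,dt$ and $\|f\|_{\Lambda^{p,\infty}_u(w)}=\sup_{t>0}t\,W\big(u(\{x:|f(x)|>t\})\big)^{1/p}$. *)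

theory Defs
  imports "HOL-Analysis.Analysis"
begin

definition cubes :: "'a::euclidean_space set set" where
  "cubes = {cbox a (a + r *\<^sub>R One) | a r. r > 0}"

definition maximal_op :: "('a::euclidean_space \<Rightarrow> real) \<Rightarrow> 'a \<Rightarrow> ennreal" where
  "maximal_op f x = (SUP Q\<in>{Q\<in>cubes. x \<in> Q}.
       (\<integral>\<^sup>+ y\<in>Q. ennreal \<bar>f y\<bar> \<partial>lebesgue) / emeasure lebesgue Q)"

definition weight_Rd :: "('a::euclidean_space \<Rightarrow> real) \<Rightarrow> bool" where
  "weight_Rd u \<longleftrightarrow> (\<forall>x. u x > 0) \<and> u \<in> borel_measurable lebesgue \<and>
     (\<forall>K. compact K \<longrightarrow> set_integrable lebesgue K u)"

definition weight_pos :: "(real \<Rightarrow> real) \<Rightarrow> bool" where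
  "weight_pos w \<longleftrightarrow> (\<forall>s>0. w s > 0) \<and>
     (\<forall>K. compact K \<and> K \<subseteq> {0<..} \<longrightarrow> set_integrable lborel K w)"

definition wmeasure :: "('a::euclidean_space \<Rightarrow> real) \<Rightarrow> 'a set \<Rightarrow> ennreal" where
  "wmeasure u E = (\<integral>\<^sup>+ x\<in>E. ennreal (u x) \<partial>lebesgue)"

definition Wfun :: "(real \<Rightarrow> real) \<Rightarrow> ennreal \<Rightarrow> ennreal" where
  "Wfun w t = (\<integral>\<^sup>+ s\<in>{s. 0 < s \<and> ennreal s < t}. ennreal (w s) \<partial>lborel)"

definition ennreal_powr :: "ennreal \<Rightarrow> real \<Rightarrow> ennreal" where
  "ennreal_powr x a = (if x = \<infinity> then \<infinity> else ennreal (enn2real x powr a))"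

definition lorentz_pow ::
  "real \<Rightarrow> ('a::euclidean_space \<Rightarrow> real) \<Rightarrow> (real \<Rightarrow> real) \<Rightarrow> ('a \<Rightarrow> ennreal) \<Rightarrow> ennreal" where
  "lorentz_pow p u w f = (\<integral>\<^sup>+ t\<in>{0<..}.
      ennreal (p * t powr (p - 1)) * Wfun w (wmeasure u {x. f x > ennreal t}) \<partial>lborel)"

definition lorentz_norm ::
  "real \<Rightarrow> ('a::euclidean_space \<Rightarrow> real) \<Rightarrow> (real \<Rightarrow> real) \<Rightarrow> ('a \<Rightarrow> ennreal) \<Rightarrow> ennreal" where
  "lorentz_norm p u w f = ennreal_powr (lorentz_pow p u w f) (1 / p)"

definition weak_lorentz_norm ::
  "real \<Rightarrow> ('a::euclidean_space \<Rightarrow> real) \<Rightarrow> (real \<Rightarrow> real) \<Rightarrow> ('a \<Rightarrow> ennreal) \<Rightarrow> ennreal" where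
  "weak_lorentz_norm p u w f = (SUP t\<in>{0<..}.
      ennreal t * ennreal_powr (Wfun w (wmeasure u {x. f x > ennreal t})) (1 / p))"

end

theory Submission
  imports Defs
begin

lemma ennreal_div_self_le: "(x::ennreal) / x \<le> 1"
proof (cases "x = 0 \<or> x = top")
  case True then show ?thesis by (auto simp: divide_ennreal_def)
next
  case False then show ?thesis by (simp add: ennreal_divide_self less_top)
qed

lemma maximal_ind_le1:
  assumes "E \<in> sets borel"
  shows "maximal_op (indicator E) x \<le> 1"
  unfolding maximal_op_def
proof (rule SUP_least)
  fix Q :: "'a set" assume "Q \<in> {Q\<in>cubes. x \<in> Q}"
  then obtain a r where Q: "Q = cbox a (a + r *\<^sub>R One)" by (auto simp: cubes_def)
  then have Qs: "Q \<in> sets lebesgue" by auto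
  have "(\<integral>\<^sup>+ y\<in>Q. ennreal \<bar>indicator E y :: real\<bar> \<partial>lebesgue) \<le> (\<integral>\<^sup>+ y. indicator Q y \<partial>lebesgue)"
    by (intro nn_integral_mono) (auto simp: indicator_def)
  also have "\<dots> = emeasure lebesgue Q" using Qs by simp
  finally have "(\<integral>\<^sup>+ y\<in>Q. ennreal \<bar>indicator E y :: real\<bar> \<partial>lebesgue) / emeasure lebesgue Q
     \<le> emeasure lebesgue Q / emeasure lebesgue Q" by (rule divide_right_mono_ennreal)
  also have "\<dots> \<le> 1" by (rule ennreal_div_self_le)
  finally show "(\<integral>\<^sup>+ y\<in>Q. ennreal \<bar>indicator E y :: real\<bar> \<partial>lebesgue) / emeasure lebesgue Q \<le> 1" .
qed

lemma Wfun_empty: "Wfun w (wmeasure u {}) = 0"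
  unfolding Wfun_def wmeasure_def by simp

lemma weak_bound:
  fixes M :: "'a::euclidean_space \<Rightarrow> ennreal"
  assumes p: "0 < p" and C: "0 < C" and t: "0 < t" and Lfin: "L \<noteq> \<infinity>"
    and H: "weak_lorentz_norm p u w M \<le> ennreal C * ennreal_powr L (1/p)"
  shows "Wfun w (wmeasure u {x. M x > ennreal t}) \<le> ennreal (C powr p * t powr (-p) * enn2real L)"
proof -
  define a where "a = Wfun w (wmeasure u {x. M x > ennreal t})"
  define rl where "rl = enn2real L"
  have rl0: "0 \<le> rl" by (simp add: rl_def)
  have "ennreal t * ennreal_powr a (1/p) \<le> weak_lorentz_norm p u w M"
    unfolding weak_lorentz_norm_def a_def using t by (intro SUP_upper) auto
  also have "\<dots> \<le> ennreal C * ennreal_powr L (1/p)" by (rule H)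
  also have "\<dots> = ennreal (C * rl powr (1/p))"
    using Lfin C by (simp add: ennreal_powr_def rl_def ennreal_mult)
  finally have H1: "ennreal t * ennreal_powr a (1/p) \<le> ennreal (C * rl powr (1/p))" .
  have afin: "a \<noteq> \<infinity>"
  proof
    assume "a = \<infinity>"
    then have "ennreal t * ennreal_powr a (1/p) = \<infinity>" using t
      by (simp add: ennreal_powr_def ennreal_mult_top)
    with H1 show False by (simp add: top_unique)
  qed
  define ra where "ra = enn2real a"
  have ra0: "0 \<le> ra" by (simp add: ra_def)
  have aeq: "a = ennreal ra" using afin by (simp add: ra_def less_top)
  have "ennreal (t * ra powr (1/p)) \<le> ennreal (C * rl powr (1/p))"
    using H1 afin t by (simp add: ennreal_powr_def ra_def ennreal_mult)
  then have H2: "t * ra powr (1/p) \<le> C * rl powr (1/p)"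
    using C by (subst (asm) ennreal_le_iff) auto
  have "(t * ra powr (1/p)) powr p \<le> (C * rl powr (1/p)) powr p"
    using H2 t ra0 p by (intro powr_mono2) auto
  then have "t powr p * ra \<le> C powr p * rl"
    using p ra0 rl0 t C by (simp add: powr_mult powr_powr)
  then have "ra \<le> C powr p * t powr (-p) * rl"
    using t by (simp add: powr_minus field_simps)
  then show ?thesis unfolding a_def[symmetric] aeq rl_def[symmetric] by (rule ennreal_leI)
qed

lemma int_powr:
  fixes l c p :: real
  assumes p: "0 < p" and l: "0 < l" and c: "0 \<le> c"
  shows "(\<integral>\<^sup>+t. ennreal (c * t powr (p - 1)) * indicator {0..l} t \<partial>lborel) = ennreal (c * (l powr p / p))"
proof -
  have "((\<lambda>t. t powr (p - 1)) has_integral (l powr (p - 1 + 1) / (p - 1 + 1))) {0..l}"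
    using p l by (intro has_integral_powr_from_0) auto
  then have "((\<lambda>t. c * t powr (p - 1)) has_integral (c * (l powr (p - 1 + 1) / (p - 1 + 1)))) {0..l}"
    by (rule has_integral_mult_right)
  then have "((\<lambda>t. c * t powr (p - 1)) has_integral (c * (l powr p / p))) {0..l}"
    by simp
  moreover have "\<And>t. t \<in> {0..l} \<Longrightarrow> 0 \<le> c * t powr (p - 1)" using c by simp
  ultimately show ?thesis by (rule nn_integral_has_integral_lebesgue'[rotated])
qed

lemma int_inv:
  fixes l c :: real
  assumes l: "0 < l" "l \<le> 1" and c: "0 \<le> c"
  shows "(\<integral>\<^sup>+t. ennreal (c * (1 / t)) * indicator {l..1} t \<partial>lborel) = ennreal (c * ln (1 / l))"
proof -
  have "((\<lambda>t. 1 / t) has_integral (ln 1 - ln l)) {l..1}"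
  proof (rule fundamental_theorem_of_calculus[of l 1 ln "\<lambda>x. 1 / x"])
    show "l \<le> 1" by fact
  next
    fix x assume "x \<in> {l..1}"
    then have "x > 0" using l by auto
    then have "(ln has_real_derivative inverse x) (at x within {l..1})"
      by (rule has_field_derivative_at_within[OF DERIV_ln])
    then have "(ln has_real_derivative 1 / x) (at x within {l..1})"
      by (simp only: divide_inverse mult_1)
    then show "(ln has_vector_derivative 1 / x) (at x within {l..1})"
      by (simp only: has_real_derivative_iff_has_vector_derivative)
  qed
  then have "((\<lambda>t. c * (1 / t)) has_integral (c * (ln 1 - ln l))) {l..1}"
    by (rule has_integral_mult_right)
  moreover have "ln 1 - ln l = ln (1 / l)" using l by (simp add: ln_div del: ln_one)
  ultimately have "((\<lambda>t. c * (1 / t)) has_integral (c * ln (1 / l))) {l..1}"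
    by (simp only:)
  moreover have "\<And>t. t \<in> {l..1} \<Longrightarrow> 0 \<le> c * (1 / t)" using c l by simp
  ultimately show ?thesis by (rule nn_integral_has_integral_lebesgue'[rotated])
qed

theorem lemma2p1:
  fixes u :: "'a::euclidean_space \<Rightarrow> real" and w :: "real \<Rightarrow> real" and p :: real
  assumes "0 < p"
    and "weight_Rd u" and "weight_pos w"
    and "\<exists>C>0. \<forall>f. f \<in> borel_measurable lebesgue \<longrightarrow>
           weak_lorentz_norm p u w (maximal_op f)
             \<le> ennreal C * lorentz_norm p u w (\<lambda>x. ennreal \<bar>f x\<bar>)"
  shows "\<exists>K>0. \<forall>lam E. 0 < lam \<and> lam < 1 \<and> E \<in> sets borel \<longrightarrow>
           lorentz_pow p u w
             (\<lambda>x. if maximal_op (indicator E) x > ennreal lam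
                   then maximal_op (indicator E) x else 0)
           \<le> ennreal (K * (1 + ln (1 / lam)))
               * lorentz_pow p u w (\<lambda>x. ennreal \<bar>indicator E x :: real\<bar>)"
proof -
  note p = assms(1)
  obtain C where C: "C > 0" and HC: "\<And>f. f \<in> borel_measurable lebesgue \<Longrightarrow>
           weak_lorentz_norm p u w (maximal_op f)
             \<le> ennreal C * lorentz_norm p u w (\<lambda>x. ennreal \<bar>f x\<bar>)"
    using assms(4) by blast
  define K where "K = C powr p * max 1 p"
  have K0: "K > 0" using C by (simp add: K_def)
  show ?thesis
  proof (intro exI[of _ K] conjI allI impI K0)
    fix lam :: real and E :: "'a set"
    assume asm: "0 < lam \<and> lam < 1 \<and> E \<in> sets borel"
    then have lam: "0 < lam" "lam < 1" and E: "E \<in> sets borel" by auto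
    define M where "M = maximal_op (indicator E :: 'a \<Rightarrow> real)"
    define F where "F = (\<lambda>x. if M x > ennreal lam then M x else 0)"
    define L where "L = lorentz_pow p u w (\<lambda>x. ennreal \<bar>indicator E x :: real\<bar>)"
    have lnpos: "0 \<le> ln (1 / lam)" using lam by simp
    have Kpos: "0 < K * (1 + ln (1 / lam))" using K0 lnpos by simp
    show "lorentz_pow p u w F \<le> ennreal (K * (1 + ln (1 / lam))) * L"
    proof (cases "L = \<infinity>")
      case True
      then show ?thesis using K0 lnpos by (simp add: ennreal_mult_top)
    next
      case Lfin: False
      define rl where "rl = enn2real L"
      have rl0: "0 \<le> rl" by (simp add: rl_def)
      have Leq: "L = ennreal rl" using Lfin by (simp add: rl_def less_top)
      have meas: "(indicator E :: 'a \<Rightarrow> real) \<in> borel_measurable lebesgue"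
        using E by (intro borel_measurable_indicator) (simp add: sets_completionI_sets)
      have H: "weak_lorentz_norm p u w M \<le> ennreal C * ennreal_powr L (1/p)"
        using HC[OF meas] unfolding M_def L_def lorentz_norm_def .
      have WB: "Wfun w (wmeasure u {x. M x > ennreal t}) \<le> ennreal (C powr p * t powr (-p) * rl)"
        if "0 < t" for t
        using weak_bound[OF p C that Lfin H] unfolding rl_def .
      have M1: "M x \<le> 1" for x unfolding M_def by (rule maximal_ind_le1[OF E])
      define K1 where "K1 = C powr p * rl * lam powr (-p) * p"
      define K2 where "K2 = C powr p * rl * p"
      have K10: "0 \<le> K1" using rl0 p by (simp add: K1_def)
      have K20: "0 \<le> K2" using rl0 p by (simp add: K2_def)
      define b where "b = (\<lambda>t. ennreal (K1 * t powr (p - 1)) * indicator {0..lam} t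
            + ennreal (K2 * (1 / t)) * indicator {lam..1} t)"
      have pw: "ennreal (p * t powr (p - 1)) * Wfun w (wmeasure u {x. F x > ennreal t}) * indicator {0<..} t \<le> b t"
        for t
      proof (cases "t > 0")
        case False then show ?thesis by simp
      next
        case t: True
        show ?thesis
        proof (cases "t < lam")
          case True
          have "{x. F x > ennreal t} = {x. M x > ennreal lam}"
          proof (intro Collect_cong iffI)
            fix x assume "F x > ennreal t"
            then show "M x > ennreal lam" unfolding F_def by (auto split: if_splits)
          next
            fix x assume a: "M x > ennreal lam"
            have "ennreal t < ennreal lam" using True t by (simp add: ennreal_lessI)
            then show "F x > ennreal t" using a unfolding F_def by auto
          qed
          then have "ennreal (p * t powr (p - 1)) * Wfun w (wmeasure u {x. F x > ennreal t})
              \<le> ennreal (p * t powr (p - 1)) * ennreal (C powr p * lam powr (-p) * rl)"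
            using WB[OF lam(1)] by (simp add: mult_left_mono)
          also have "\<dots> = ennreal (p * t powr (p - 1) * (C powr p * lam powr (-p) * rl))"
            using p rl0 by (intro ennreal_mult[symmetric]) auto
          also have "p * t powr (p - 1) * (C powr p * lam powr (-p) * rl) = K1 * t powr (p - 1)"
            by (simp add: K1_def mult_ac)
          also have "\<dots> \<le> b t" using True t unfolding b_def by simp
          finally show ?thesis using t by simp
        next
          case False
          show ?thesis
          proof (cases "t < 1")
            case True
            have "{x. F x > ennreal t} = {x. M x > ennreal t}"
            proof (intro Collect_cong iffI)
              fix x assume "F x > ennreal t"
              then show "M x > ennreal t" unfolding F_def by (auto split: if_splits)
            next
              fix x assume a: "M x > ennreal t"
              have "ennreal lam \<le> ennreal t" using False by (simp add: ennreal_leI)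
              then have "M x > ennreal lam" using a by order
              then show "F x > ennreal t" using a unfolding F_def by auto
            qed
            then have "ennreal (p * t powr (p - 1)) * Wfun w (wmeasure u {x. F x > ennreal t})
                \<le> ennreal (p * t powr (p - 1)) * ennreal (C powr p * t powr (-p) * rl)"
              using WB[OF t] by (simp add: mult_left_mono)
            also have "\<dots> = ennreal (p * t powr (p - 1) * (C powr p * t powr (-p) * rl))"
              using p rl0 by (intro ennreal_mult[symmetric]) auto
            also have "p * t powr (p - 1) * (C powr p * t powr (-p) * rl) = K2 * (1 / t)"
            proof -
              have "t powr (p - 1) * t powr (-p) = t powr (-1)" by (simp add: powr_add[symmetric])
              also have "\<dots> = 1 / t" using t by (simp add: powr_minus_divide)
              finally have e: "t powr (p - 1) * t powr (-p) = 1 / t" .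
              have "p * t powr (p - 1) * (C powr p * t powr (-p) * rl)
                  = p * C powr p * rl * (t powr (p - 1) * t powr (-p))" by (simp add: mult_ac)
              then show ?thesis unfolding e K2_def by simp
            qed
            also have "ennreal (K2 * (1 / t)) \<le> b t" using True False t unfolding b_def by simp
            finally show ?thesis using t by simp
          next
            case False
            have "{x. F x > ennreal t} = {}"
            proof -
              have "F x \<le> ennreal t" for x
              proof -
                have "F x \<le> 1" using M1[of x] unfolding F_def by auto
                also have "(1::ennreal) \<le> ennreal t" using False by simp
                finally show ?thesis .
              qed
              then show ?thesis by (auto simp: not_less[symmetric])
            qed
            then show ?thesis by (simp add: Wfun_empty)
          qed
        qed
      qed
      have "lorentz_pow p u w F = (\<integral>\<^sup>+t. ennreal (p * t powr (p - 1)) * Wfun w (wmeasure u {x. F x > ennreal t}) * indicator {0<..} t \<partial>lborel)"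
        unfolding lorentz_pow_def by simp
      also have "\<dots> \<le> (\<integral>\<^sup>+t. b t \<partial>lborel)"
        by (intro nn_integral_mono pw)
      also have "\<dots> = (\<integral>\<^sup>+t. ennreal (K1 * t powr (p - 1)) * indicator {0..lam} t \<partial>lborel)
            + (\<integral>\<^sup>+t. ennreal (K2 * (1 / t)) * indicator {lam..1} t \<partial>lborel)"
        unfolding b_def by (intro nn_integral_add) measurable
      also have "\<dots> = ennreal (K1 * (lam powr p / p)) + ennreal (K2 * ln (1 / lam))"
        using int_powr[OF p lam(1) K10] int_inv[of lam K2] lam K20 by simp
      also have "\<dots> = ennreal (K1 * (lam powr p / p) + K2 * ln (1 / lam))"
        using K10 K20 lnpos p lam by (simp add: ennreal_plus)
      also have "\<dots> \<le> ennreal (K * (1 + ln (1 / lam)) * rl)"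
      proof (rule ennreal_leI)
        have e1: "K1 * (lam powr p / p) = C powr p * rl"
          using p lam by (simp add: K1_def powr_minus field_simps)
        have "C powr p * rl + C powr p * rl * p * ln (1 / lam)
            \<le> C powr p * rl * max 1 p + C powr p * rl * max 1 p * ln (1 / lam)"
        proof (intro add_mono mult_right_mono mult_left_mono)
          show "0 \<le> C powr p * rl" using rl0 by simp
          have "C powr p * rl * 1 \<le> C powr p * rl * max 1 p"
            using rl0 by (intro mult_left_mono) auto
          then show "C powr p * rl \<le> C powr p * rl * max 1 p" by simp
        qed (use rl0 lnpos in auto)
        then show "K1 * (lam powr p / p) + K2 * ln (1 / lam) \<le> K * (1 + ln (1 / lam)) * rl"
          unfolding e1 K2_def K_def by (simp add: algebra_simps)
      qed
      also have "\<dots> = ennreal (K * (1 + ln (1 / lam))) * L"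
        unfolding Leq using Kpos rl0 by (intro ennreal_mult) auto
      finally show ?thesis unfolding F_def M_def .
    qed
  qed
qed

end
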